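(* For every integer $n\ge0$, with the polynomial matrix $M(x)$ defined below, $\operatorname{Pf}M(x)=(-1)^n\operatorname{Pf}M(-2n-1-x)$ as polynomials in $x$.
   Context: For an indeterminate $y$ and integer $k\ge0$, $\binom yk=y(y-1)\cdots(y-k+1)/k!$. For integers $i,j\ge1$ define the polynomials $R_{i,j}(x)=\sum_{\ell=0}^{i-1}\frac{j-i}{i}\binom{j-1}{i-1-\ell}\binom{\ell+j}{\ell}\binom{2x+2n+2}{\ell+j+1}$ (for integers $x\ge0$ this equals $\sum_{t=1}^{2x+2n+1}\frac{j-i}{t}\binom ti\binom tj$) and $T_{i,j}(x)=\binom{2x+2n+1}{i}\big(\binom{x+n}{j}+\binom{x+n+1}{j}\big)$. $M(x)$ is the $(2n+2)\times(2n+2)$ skew-symmetric matrix with $M_{i,j}(x)=R_{i,j}(x)+T_{i,j}(x)-T_{j,i}(x)$ for $1\le i,j\le 2n+1$ and $M_{i,2n+2}(x)=\binom{x+n}{i-1}$ for $1\le i\le 2n+1$. *)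

theory Defs
  imports Complex_Main "HOL-Combinatorics.Permutations"
begin

definition pfaffian :: "nat \<Rightarrow> (nat \<Rightarrow> nat \<Rightarrow> real) \<Rightarrow> real" where
  "pfaffian m A =
     (\<Sum>s | s permutes {1..2*m}. of_int (sign s) * (\<Prod>i=1..m. A (s (2*i-1)) (s (2*i))))
       / (2 ^ m * fact m)"

definition Rpol :: "nat \<Rightarrow> nat \<Rightarrow> nat \<Rightarrow> real \<Rightarrow> real" where
  "Rpol n i j x = (\<Sum>l=0..i-1. ((real j - real i) / real i) * real ((j-1) choose (i-1-l))
       * real ((l+j) choose l) * ((2*x + 2*real n + 2) gchoose (l+j+1)))"

definition Tpol :: "nat \<Rightarrow> nat \<Rightarrow> nat \<Rightarrow> real \<Rightarrow> real" where
  "Tpol n i j x = ((2*x + 2*real n + 1) gchoose i) *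
       (((x + real n) gchoose j) + ((x + real n + 1) gchoose j))"

definition Mmat :: "nat \<Rightarrow> real \<Rightarrow> nat \<Rightarrow> nat \<Rightarrow> real" where
  "Mmat n x i j =
     (if i \<le> 2*n+1 \<and> j \<le> 2*n+1 then Rpol n i j x + Tpol n i j x - Tpol n j i x
      else if i \<le> 2*n+1 \<and> j = 2*n+2 then (x + real n) gchoose (i-1)
      else if i = 2*n+2 \<and> j \<le> 2*n+1 then - ((x + real n) gchoose (j-1))
      else 0)"

end

theory Submission
  imports Defs "HOL-Computational_Algebra.Computational_Algebra"
begin


definition Dq :: "nat set \<Rightarrow> (nat \<Rightarrow> nat \<Rightarrow> real) \<Rightarrow> (nat \<Rightarrow> nat) \<Rightarrow> real" where
  "Dq I Q g = (\<Sum>s | s permutes I. of_int (sign s) * (\<Prod>t\<in>I. Q (s t) (g t)))"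

lemma Dq_noninj:
  assumes fin: "finite I" and a: "a \<in> I" and b: "b \<in> I" and ab: "a \<noteq> b" and g: "g a = g b"
  shows "Dq I Q g = 0"
proof -
  let ?\<tau> = "Transposition.transpose a b"
  have tau: "?\<tau> permutes I" using a b by (rule permutes_swap_id)
  define f where "f s = of_int (sign s) * (\<Prod>t\<in>I. Q (s t) (g t))" for s :: "nat \<Rightarrow> nat"
  have gt: "g \<circ> ?\<tau> = g" using g by (auto simp: fun_eq_iff Transposition.transpose_def)
  have "Dq I Q g = (\<Sum>s | s permutes I. f s)" by (simp add: Dq_def f_def)
  also have "\<dots> = (\<Sum>s | s permutes I. f (s \<circ> ?\<tau>))"
    by (rule sum_permutations_compose_right[OF tau])
  also have "\<dots> = (\<Sum>s | s permutes I. - f s)"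
  proof (rule sum.cong[OF refl])
    fix s assume "s \<in> {s. s permutes I}"
    hence s: "s permutes I" by simp
    have ps: "permutation s" using s fin permutation_permutes by blast
    have pt: "permutation ?\<tau>" using tau fin permutation_permutes by blast
    have sg: "sign (s \<circ> ?\<tau>) = - sign s"
      using sign_compose[OF ps pt] ab by (simp add: sign_swap_id)
    have "(\<Prod>t\<in>I. Q ((s \<circ> ?\<tau>) t) (g t)) = (\<Prod>t\<in>I. Q ((s \<circ> ?\<tau>) t) ((g \<circ> ?\<tau>) t))"
      using gt by simp
    also have "\<dots> = (\<Prod>t\<in>I. Q (s t) (g t))"
      using prod.permute[OF tau, of "\<lambda>t. Q (s t) (g t)"] by (simp add: comp_def)
    finally show "f (s \<circ> ?\<tau>) = - f s" unfolding f_def using sg by simp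
  qed
  also have "\<dots> = - (\<Sum>s | s permutes I. f s)" by (simp add: sum_negf)
  finally have "Dq I Q g = - Dq I Q g" by (simp add: Dq_def f_def)
  thus ?thesis by simp
qed

lemma Dq_perm:
  assumes fin: "finite I" and p: "p permutes I"
  shows "Dq I Q p = of_int (sign p) * Dq I Q id"
proof -
  have "Dq I Q p = (\<Sum>s | s permutes I. of_int (sign (s \<circ> p)) * (\<Prod>t\<in>I. Q ((s \<circ> p) t) (p t)))"
    unfolding Dq_def by (rule sum_permutations_compose_right[OF p])
  also have "\<dots> = (\<Sum>s | s permutes I. of_int (sign p) * (of_int (sign s) * (\<Prod>t\<in>I. Q (s t) t)))"
  proof (rule sum.cong[OF refl])
    fix s assume "s \<in> {s. s permutes I}"
    hence s: "s permutes I" by simp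
    have ps: "permutation s" using s fin permutation_permutes by blast
    have pp: "permutation p" using p fin permutation_permutes by blast
    have "(\<Prod>t\<in>I. Q ((s \<circ> p) t) (p t)) = (\<Prod>t\<in>I. Q (s t) t)"
      using prod.permute[OF p, of "\<lambda>t. Q (s t) t"] by (simp add: comp_def)
    thus "of_int (sign (s \<circ> p)) * (\<Prod>t\<in>I. Q ((s \<circ> p) t) (p t))
        = of_int (sign p) * (of_int (sign s) * (\<Prod>t\<in>I. Q (s t) t))"
      using sign_compose[OF ps pp] by simp
  qed
  also have "\<dots> = of_int (sign p) * Dq I Q id"
    by (simp add: Dq_def sum_distrib_left)
  finally show ?thesis .
qed



lemma prod_pairs:
  fixes \<phi> :: "nat \<Rightarrow> real"
  shows "(\<Prod>t\<in>{1..2*m}. \<phi> t) = (\<Prod>i\<in>{1..m}. \<phi> (2*i-1) * \<phi> (2*i))"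
proof (induction m)
  case 0 then show ?case by simp
next
  case (Suc m)
  have e: "{1..2*Suc m} = insert (2*m+2) (insert (2*m+1) {1..2*m})" by auto
  have e2: "{1..Suc m} = insert (Suc m) {1..m}" by auto
  show ?case unfolding e e2 using Suc by (simp add: algebra_simps)
qed

lemma expand_prod:
  fixes A Q :: "nat \<Rightarrow> nat \<Rightarrow> real" and h :: "nat \<Rightarrow> nat"
  shows "(\<Prod>i=1..m. (\<Sum>k\<in>{1..2*m}. \<Sum>l\<in>{1..2*m}. Q (h (2*i-1)) k * A k l * Q (h (2*i)) l))
     = (\<Sum>g\<in>PiE {1..2*m} (\<lambda>_. {1..2*m}). (\<Prod>i=1..m. A (g (2*i-1)) (g (2*i))) * (\<Prod>t\<in>{1..2*m}. Q (h t) (g t)))"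
proof -
  define I where "I = {1..2*m}"
  define F where "F i kl = Q (h (2*i-1)) (fst kl) * A (fst kl) (snd kl) * Q (h (2*i)) (snd kl)" for i kl
  have "(\<Prod>i=1..m. (\<Sum>k\<in>I. \<Sum>l\<in>I. Q (h (2*i-1)) k * A k l * Q (h (2*i)) l))
       = (\<Prod>i=1..m. (\<Sum>kl\<in>I \<times> I. F i kl))"
    by (simp add: sum.cartesian_product F_def case_prod_beta)
  also have "\<dots> = (\<Sum>G\<in>PiE {1..m} (\<lambda>_. I \<times> I). \<Prod>i=1..m. F i (G i))"
    by (rule prod_sum_PiE) (auto simp: I_def)
  also have "\<dots> = (\<Sum>g\<in>PiE I (\<lambda>_. I). \<Prod>i=1..m. F i (g (2*i-1), g (2*i)))"
  proof (rule sum.reindex_bij_witness[where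
        i = "\<lambda>g k. if k \<in> {1..m} then (g (2*k-1), g (2*k)) else undefined"
        and j = "\<lambda>G t. if t \<in> I then (if odd t then fst (G ((t+1) div 2)) else snd (G (t div 2))) else undefined"])
    fix G assume G: "G \<in> PiE {1..m} (\<lambda>_. I \<times> I)"
    show "(\<lambda>k. if k \<in> {1..m} then ((\<lambda>t. if t \<in> I then (if odd t then fst (G ((t+1) div 2)) else snd (G (t div 2))) else undefined) (2*k-1),
               (\<lambda>t. if t \<in> I then (if odd t then fst (G ((t+1) div 2)) else snd (G (t div 2))) else undefined) (2*k)) else undefined) = G"
    proof
      fix k show "(if k \<in> {1..m} then ((\<lambda>t. if t \<in> I then (if odd t then fst (G ((t+1) div 2)) else snd (G (t div 2))) else undefined) (2*k-1),
               (\<lambda>t. if t \<in> I then (if odd t then fst (G ((t+1) div 2)) else snd (G (t div 2))) else undefined) (2*k)) else undefined) = G k"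
      proof (cases "k \<in> {1..m}")
        case True
        have o: "odd (2*k-1)" using True by simp
        have d: "(2*k-1+1) div 2 = k" using True by simp
        have i1: "2*k-1 \<in> I" "2*k \<in> I" using True by (auto simp: I_def)
        show ?thesis using True o d i1 by simp
      next
        case False then show ?thesis using G by (auto simp: PiE_def extensional_def)
      qed
    qed
    show "(\<lambda>t. if t \<in> I then (if odd t then fst (G ((t+1) div 2)) else snd (G (t div 2))) else undefined) \<in> PiE I (\<lambda>_. I)"
    proof -
      have "\<And>t. t \<in> I \<Longrightarrow> (t+1) div 2 \<in> {1..m} \<and> t div 2 \<in> {1..m} \<or> odd t \<and> (t+1) div 2 \<in> {1..m}"
        by (auto simp: I_def)
      have "\<And>t. t \<in> I \<Longrightarrow> odd t \<Longrightarrow> (t+1) div 2 \<in> {1..m}" by (auto simp: I_def elim!: oddE)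
      moreover have "\<And>t. t \<in> I \<Longrightarrow> even t \<Longrightarrow> t div 2 \<in> {1..m}" by (auto simp: I_def elim!: evenE)
      ultimately show ?thesis using G by (fastforce simp: PiE_def Pi_def)
    qed
  next
    fix g assume g: "g \<in> PiE I (\<lambda>_. I)"
    show "(\<lambda>t. if t \<in> I then (if odd t then fst ((\<lambda>k. if k \<in> {1..m} then (g (2*k-1), g (2*k)) else undefined) ((t+1) div 2))
             else snd ((\<lambda>k. if k \<in> {1..m} then (g (2*k-1), g (2*k)) else undefined) (t div 2))) else undefined) = g"
    proof
      fix t show "(if t \<in> I then (if odd t then fst ((\<lambda>k. if k \<in> {1..m} then (g (2*k-1), g (2*k)) else undefined) ((t+1) div 2))
             else snd ((\<lambda>k. if k \<in> {1..m} then (g (2*k-1), g (2*k)) else undefined) (t div 2))) else undefined) = g t"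
      proof (cases "t \<in> I")
        case True
        show ?thesis
        proof (cases "odd t")
          case o: True
          then obtain r where r: "t = 2*r+1" by (auto elim: oddE)
          show ?thesis using True o r by (auto simp: I_def)
        next
          case e: False
          then obtain r where r: "t = 2*r" by (auto elim: evenE)
          show ?thesis using True e r by (auto simp: I_def)
        qed
      next
        case False then show ?thesis using g by (auto simp: PiE_def extensional_def)
      qed
    qed
    show "(\<lambda>k. if k \<in> {1..m} then (g (2*k-1), g (2*k)) else undefined) \<in> PiE {1..m} (\<lambda>_. I \<times> I)"
    proof -
      have "\<And>k. k \<in> {1..m} \<Longrightarrow> 2*k-1 \<in> I \<and> 2*k \<in> I" by (auto simp: I_def)
      then show ?thesis using g by (auto simp: PiE_def Pi_def extensional_def)
    qed
  next
    fix G assume G: "G \<in> PiE {1..m} (\<lambda>_. I \<times> I)"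
    show "(\<Prod>i=1..m. F i ((\<lambda>t. if t \<in> I then (if odd t then fst (G ((t+1) div 2)) else snd (G (t div 2))) else undefined) (2*i-1),
                      (\<lambda>t. if t \<in> I then (if odd t then fst (G ((t+1) div 2)) else snd (G (t div 2))) else undefined) (2*i)))
          = (\<Prod>i=1..m. F i (G i))"
    proof (rule prod.cong[OF refl])
      fix k assume True: "k \<in> {1..m}"
      have o: "odd (2*k-1)" using True by simp
      have d: "(2*k-1+1) div 2 = k" using True by simp
      have i1: "2*k-1 \<in> I" "2*k \<in> I" using True by (auto simp: I_def)
      show "F k ((\<lambda>t. if t \<in> I then (if odd t then fst (G ((t+1) div 2)) else snd (G (t div 2))) else undefined) (2*k-1),
                      (\<lambda>t. if t \<in> I then (if odd t then fst (G ((t+1) div 2)) else snd (G (t div 2))) else undefined) (2*k))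
           = F k (G k)" using o d i1 by simp
    qed
  qed
  also have "\<dots> = (\<Sum>g\<in>PiE I (\<lambda>_. I). (\<Prod>i=1..m. A (g (2*i-1)) (g (2*i))) * (\<Prod>t\<in>I. Q (h t) (g t)))"
  proof (rule sum.cong[OF refl])
    fix g
    have "(\<Prod>t\<in>I. Q (h t) (g t)) = (\<Prod>i=1..m. Q (h (2*i-1)) (g (2*i-1)) * Q (h (2*i)) (g (2*i)))"
      unfolding I_def by (rule prod_pairs)
    then show "(\<Prod>i=1..m. F i (g (2*i-1), g (2*i))) = (\<Prod>i=1..m. A (g (2*i-1)) (g (2*i))) * (\<Prod>t\<in>I. Q (h t) (g t))"
      by (simp add: F_def prod.distrib[symmetric] algebra_simps)
  qed
  finally show ?thesis unfolding I_def .
qed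



lemma pf_congr:
  fixes A Q :: "nat \<Rightarrow> nat \<Rightarrow> real"
  shows "pfaffian m (\<lambda>a b. \<Sum>k\<in>{1..2*m}. \<Sum>l\<in>{1..2*m}. Q a k * A k l * Q b l)
       = Dq {1..2*m} Q id * pfaffian m A"
proof -
  define I where "I = {1..2*m}"
  have fin: "finite I" by (simp add: I_def)
  define W where "W g = (\<Prod>i=1..m. A (g (2*i-1)) (g (2*i)))" for g :: "nat \<Rightarrow> nat"
  have Wcong: "W g = W g'" if "\<And>t. t \<in> I \<Longrightarrow> g t = g' t" for g g'
  proof -
    have "\<And>i. i \<in> {1..m} \<Longrightarrow> 2*i-1 \<in> I \<and> 2*i \<in> I" by (auto simp: I_def)
    then show ?thesis unfolding W_def using that by (intro prod.cong) auto
  qed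
  have Dcong: "Dq I Q g = Dq I Q g'" if "\<And>t. t \<in> I \<Longrightarrow> g t = g' t" for g g'
    unfolding Dq_def using that by (intro sum.cong refl arg_cong2[where f="(*)"] prod.cong) auto
  have "(\<Sum>s | s permutes I. of_int (sign s) * (\<Prod>i=1..m. (\<Sum>k\<in>I. \<Sum>l\<in>I. Q (s (2*i-1)) k * A k l * Q (s (2*i)) l)))
      = (\<Sum>s | s permutes I. of_int (sign s) * (\<Sum>g\<in>PiE I (\<lambda>_. I). W g * (\<Prod>t\<in>I. Q (s t) (g t))))"
    unfolding I_def W_def by (simp only: expand_prod)
  also have "\<dots> = (\<Sum>g\<in>PiE I (\<lambda>_. I). W g * Dq I Q g)"
  proof -
    have "(\<Sum>s | s permutes I. of_int (sign s) * (\<Sum>g\<in>PiE I (\<lambda>_. I). W g * (\<Prod>t\<in>I. Q (s t) (g t))))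
        = (\<Sum>s | s permutes I. \<Sum>g\<in>PiE I (\<lambda>_. I). W g * (of_int (sign s) * (\<Prod>t\<in>I. Q (s t) (g t))))"
      by (simp add: sum_distrib_left algebra_simps)
    also have "\<dots> = (\<Sum>g\<in>PiE I (\<lambda>_. I). \<Sum>s | s permutes I. W g * (of_int (sign s) * (\<Prod>t\<in>I. Q (s t) (g t))))"
      by (rule sum.swap)
    also have "\<dots> = (\<Sum>g\<in>PiE I (\<lambda>_. I). W g * Dq I Q g)"
      by (simp add: Dq_def sum_distrib_left)
    finally show ?thesis .
  qed
  also have "\<dots> = (\<Sum>g\<in>{g\<in>PiE I (\<lambda>_. I). inj_on g I}. W g * Dq I Q g)"
  proof (rule sym, rule sum.mono_neutral_left)
    show "finite (PiE I (\<lambda>_. I))" using fin by (simp add: finite_PiE)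
    show "{g \<in> PiE I (\<lambda>_. I). inj_on g I} \<subseteq> PiE I (\<lambda>_. I)" by auto
    show "\<forall>g\<in>PiE I (\<lambda>_. I) - {g \<in> PiE I (\<lambda>_. I). inj_on g I}. W g * Dq I Q g = 0"
    proof
      fix g assume "g \<in> PiE I (\<lambda>_. I) - {g \<in> PiE I (\<lambda>_. I). inj_on g I}"
      then obtain a b where "a \<in> I" "b \<in> I" "a \<noteq> b" "g a = g b" by (auto simp: inj_on_def)
      then show "W g * Dq I Q g = 0" using Dq_noninj[OF fin] by simp
    qed
  qed
  also have "\<dots> = (\<Sum>p | p permutes I. W p * Dq I Q p)"
  proof (rule sum.reindex_bij_witness[where i = "\<lambda>p. restrict p I" and j = "\<lambda>g t. if t \<in> I then g t else t"])
    fix g assume g: "g \<in> {g\<in>PiE I (\<lambda>_. I). inj_on g I}"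
    show "restrict (\<lambda>t. if t \<in> I then g t else t) I = g"
      using g by (auto simp: fun_eq_iff restrict_def PiE_def extensional_def)
    have "(\<lambda>t. if t \<in> I then g t else t) permutes I"
    proof (rule inj_imp_permutes[OF _ fin])
      show "inj_on (\<lambda>t. if t \<in> I then g t else t) I" using g by (auto simp: inj_on_def)
      show "\<And>x. x \<in> I \<Longrightarrow> (if x \<in> I then g x else x) \<in> I" using g by auto
    qed auto
    then show "(\<lambda>t. if t \<in> I then g t else t) \<in> {p. p permutes I}" by simp
    show "W (\<lambda>t. if t \<in> I then g t else t) * Dq I Q (\<lambda>t. if t \<in> I then g t else t) = W g * Dq I Q g"
      using Wcong[of "\<lambda>t. if t \<in> I then g t else t" g] Dcong[of "\<lambda>t. if t \<in> I then g t else t" g] by simp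
  next
    fix p assume "p \<in> {p. p permutes I}"
    hence p: "p permutes I" by simp
    show "(\<lambda>t. if t \<in> I then restrict p I t else t) = p"
      using p by (auto simp: fun_eq_iff permutes_not_in)
    show "restrict p I \<in> {g\<in>PiE I (\<lambda>_. I). inj_on g I}"
      using p permutes_in_image[OF p] permutes_inj_on[OF p]
      by (auto simp: PiE_def Pi_def inj_on_def)
  qed
  also have "\<dots> = Dq I Q id * (\<Sum>p | p permutes I. of_int (sign p) * W p)"
  proof -
    have "(\<Sum>p | p permutes I. W p * Dq I Q p) = (\<Sum>p | p permutes I. Dq I Q id * (of_int (sign p) * W p))"
    proof (rule sum.cong[OF refl])
      fix p assume "p \<in> {p. p permutes I}"
      then have "Dq I Q p = of_int (sign p) * Dq I Q id" using Dq_perm[OF fin, of p Q] by simp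
      then show "W p * Dq I Q p = Dq I Q id * (of_int (sign p) * W p)" by (simp only: ac_simps)
    qed
    then show ?thesis by (simp add: sum_distrib_left)
  qed
  finally show ?thesis
    unfolding pfaffian_def I_def[symmetric] W_def by simp
qed



definition Qm :: "nat \<Rightarrow> nat \<Rightarrow> nat \<Rightarrow> real" where
  "Qm n a b = (if a \<le> 2*n+1 \<and> b \<le> 2*n+1 then (-1)^(a-1) * real ((a-1) choose (b-1))
               else if a = b then 1 else 0)"

lemma perm_ge_id:
  fixes I :: "nat set"
  assumes fin: "finite I" and s: "s permutes I" and ge: "\<forall>t\<in>I. t \<le> s t"
  shows "\<forall>t\<in>I. s t = t"
proof (rule ccontr)
  assume "\<not> (\<forall>t\<in>I. s t = t)"
  then obtain t0 where t0: "t0 \<in> I" "t0 < s t0" using ge by force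
  have "sum (\<lambda>t. t) I < sum s I"
    using sum_strict_mono_ex1[OF fin, of "\<lambda>t. t" s] ge t0 by blast
  moreover have "sum (\<lambda>t. t) (s ` I) = sum s I"
    using sum.reindex[OF permutes_inj_on[OF s], of "\<lambda>t. t"] by simp
  moreover have "s ` I = I" by (rule permutes_image[OF s])
  ultimately show False by simp
qed

lemma prod_alt_sign: "(\<Prod>t\<in>{1..2*n+1}. (-1::real)^(t-1)) = (-1)^n"
proof (induction n)
  case 0 then show ?case by simp
next
  case (Suc n)
  have e: "{1..2*Suc n+1} = insert (2*n+3) (insert (2*n+2) {1..2*n+1})" by auto
  have "(-1::real)^(2*n+2-1) = -1" by simp
  moreover have "(-1::real)^(2*n+3-1) = 1" by simp
  ultimately show ?case unfolding e using Suc by simp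
qed

lemma Dq_Qm: "Dq {1..2*n+2} (Qm n) id = (-1)^n"
proof -
  define I where "I = {1..2*n+2}"
  have fin: "finite I" by (simp add: I_def)
  define f where "f s = of_int (sign s) * (\<Prod>t\<in>I. Qm n (s t) (id t))" for s :: "nat \<Rightarrow> nat"
  have z: "f s = 0" if s: "s \<in> {s. s permutes I} - {id}" for s
  proof -
    have sp: "s permutes I" and sid: "s \<noteq> id" using s by auto
    have "\<not> (\<forall>t\<in>I. s t = t)"
    proof
      assume "\<forall>t\<in>I. s t = t"
      then have "s = id" using permutes_not_in[OF sp] by (auto simp: fun_eq_iff)
      with sid show False by simp
    qed
    then obtain t where t: "t \<in> I" "s t < t" using perm_ge_id[OF fin sp] by force
    have st: "s t \<in> I" using t permutes_in_image[OF sp] by simp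
    have "Qm n (s t) t = 0"
      using t st by (auto simp: Qm_def I_def)
    then have "(\<Prod>t\<in>I. Qm n (s t) (id t)) = 0" using t fin by (auto intro: prod_zero)
    then show ?thesis by (simp add: f_def)
  qed
  have "Dq I (Qm n) id = (\<Sum>s | s permutes I. f s)" by (simp add: Dq_def f_def)
  also have "\<dots> = f id + (\<Sum>s \<in> {s. s permutes I} - {id}. f s)"
    by (rule sum.remove) (auto simp: fin finite_permutations permutes_id)
  also have "\<dots> = f id" using z by simp
  also have "\<dots> = (\<Prod>t\<in>I. Qm n t t)" by (simp add: f_def)
  also have "\<dots> = Qm n (2*n+2) (2*n+2) * (\<Prod>t\<in>{1..2*n+1}. Qm n t t)"
  proof -
    have "I = insert (2*n+2) {1..2*n+1}" by (auto simp: I_def)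
    then show ?thesis by simp
  qed
  also have "\<dots> = (\<Prod>t\<in>{1..2*n+1}. (-1::real)^(t-1))"
    by (simp add: Qm_def)
  finally show ?thesis using prod_alt_sign by (simp add: I_def)
qed



definition Pm :: "nat \<Rightarrow> nat \<Rightarrow> real" where
  "Pm a k = (-1)^(a-1) * real ((a-1) choose (k-1))"

lemma H1:
  fixes z :: real
  assumes "1 \<le> a" "a \<le> K"
  shows "(\<Sum>k=1..K. real ((a-1) choose (k-1)) * (z gchoose (k-1))) = (z + of_nat (a-1)) gchoose (a-1)"
proof -
  obtain K' where K: "K = Suc K'" using assms by (cases K) auto
  define m where "m = a - 1"
  have mK: "m \<le> K'" using assms K by (simp add: m_def)
  have "(\<Sum>k=1..K. real (m choose (k-1)) * (z gchoose (k-1))) = (\<Sum>j=0..K'. real (m choose j) * (z gchoose j))"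
    unfolding K One_nat_def sum.shift_bounds_cl_Suc_ivl by simp
  also have "\<dots> = (\<Sum>j=0..m. real (m choose j) * (z gchoose j))"
    by (rule sum.mono_neutral_right) (use mK in \<open>auto simp: binomial_eq_0\<close>)
  also have "\<dots> = (\<Sum>j=0..m. (z gchoose j) * (of_nat m gchoose (m - j)))"
  proof (rule sum.cong[OF refl])
    fix j assume "j \<in> {0..m}"
    then have "m choose j = m choose (m - j)" by (intro binomial_symmetric) simp
    then show "real (m choose j) * (z gchoose j) = (z gchoose j) * (of_nat m gchoose (m - j))"
      by (simp add: binomial_gbinomial[symmetric])
  qed
  also have "\<dots> = (z + of_nat m) gchoose m" by (rule gbinomial_Vandermonde)
  finally show ?thesis by (simp add: m_def)
qed

lemma H2:
  fixes w :: real
  assumes "1 \<le> a" "a \<le> K"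
  shows "(\<Sum>k=1..K. real ((a-1) choose (k-1)) * (w gchoose k)) = (w + of_nat (a-1)) gchoose a"
proof -
  have "(\<Sum>k=1..K. real ((a-1) choose (k-1)) * (w gchoose k)) = (\<Sum>k=1..a. real ((a-1) choose (k-1)) * (w gchoose k))"
    by (rule sum.mono_neutral_right) (use assms in auto)
  also have "\<dots> = (\<Sum>k=1..a. (w gchoose k) * (of_nat (a-1) gchoose (a - k)))"
  proof (rule sum.cong[OF refl])
    fix k assume k: "k \<in> {1..a}"
    then have "(a-1) choose (k-1) = (a-1) choose ((a-1) - (k-1))" by (intro binomial_symmetric) auto
    moreover have "(a-1) - (k-1) = a - k" using k by simp
    ultimately show "real ((a-1) choose (k-1)) * (w gchoose k) = (w gchoose k) * (of_nat (a-1) gchoose (a - k))"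
      by (simp add: binomial_gbinomial[symmetric])
  qed
  also have "\<dots> = (\<Sum>k=0..a. (w gchoose k) * (of_nat (a-1) gchoose (a - k)))"
  proof -
    have "(\<Sum>k=0..a. (w gchoose k) * (of_nat (a-1) gchoose (a - k)))
        = (w gchoose 0) * (of_nat (a-1) gchoose (a - 0)) + (\<Sum>k=Suc 0..a. (w gchoose k) * (of_nat (a-1) gchoose (a - k)))"
      by (rule sum.atLeast_Suc_atMost) simp
    moreover have "(of_nat (a-1) gchoose a :: real) = 0"
    proof -
      have "((a-1) choose a) = 0" using assms by (simp add: binomial_eq_0)
      then show ?thesis by (metis binomial_gbinomial of_nat_0)
    qed
    ultimately show ?thesis by simp
  qed
  also have "\<dots> = (w + of_nat (a-1)) gchoose a" by (rule gbinomial_Vandermonde)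
  finally show ?thesis .
qed

lemma Pf_lemma:
  fixes z :: real
  assumes "1 \<le> a" "a \<le> K"
  shows "(\<Sum>k=1..K. Pm a k * (z gchoose (k-1))) = (-z-1) gchoose (a-1)"
proof -
  have "(\<Sum>k=1..K. Pm a k * (z gchoose (k-1))) = (-1)^(a-1) * (\<Sum>k=1..K. real ((a-1) choose (k-1)) * (z gchoose (k-1)))"
    by (simp add: Pm_def sum_distrib_left mult.assoc)
  also have "\<dots> = (-1)^(a-1) * ((z + of_nat (a-1)) gchoose (a-1))" using H1[OF assms] by simp
  also have "\<dots> = (-z-1) gchoose (a-1)"
  proof -
    have "(-z-1) gchoose (a-1) = (-1)^(a-1) * ((of_nat (a-1) - (-z-1) - 1) gchoose (a-1))"
      by (rule gbinomial_negated_upper)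
    moreover have "(of_nat (a-1) - (-z-1) - 1 :: real) = z + of_nat (a-1)" by simp
    ultimately show ?thesis by (simp add: add.commute)
  qed
  finally show ?thesis .
qed

lemma Pe_lemma:
  fixes w :: real
  assumes "1 \<le> a" "a \<le> K"
  shows "(\<Sum>k=1..K. Pm a k * (w gchoose k)) = - ((-w) gchoose a)"
proof -
  have "(\<Sum>k=1..K. Pm a k * (w gchoose k)) = (-1)^(a-1) * (\<Sum>k=1..K. real ((a-1) choose (k-1)) * (w gchoose k))"
    by (simp add: Pm_def sum_distrib_left mult.assoc)
  also have "\<dots> = (-1)^(a-1) * ((w + of_nat (a-1)) gchoose a)" using H2[OF assms] by simp
  also have "\<dots> = - ((-w) gchoose a)"
  proof -
    have "((-w) gchoose a) = (-1)^a * ((of_nat a - (-w) - 1) gchoose a)" by (rule gbinomial_negated_upper)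
    moreover have "(of_nat a - (-w) - 1 :: real) = w + of_nat (a-1)" using assms by (simp add: of_nat_diff)
    moreover have "(-1::real)^a = - ((-1)^(a-1))"
    proof -
      obtain b where "a = Suc b" using assms by (cases a) auto
      then show ?thesis by simp
    qed
    ultimately have "((-w) gchoose a) = - ((-1)^(a-1)) * ((w + of_nat (a-1)) gchoose a)" by (simp only:)
    then show ?thesis by (simp only: mult_minus_left minus_minus)
  qed
  finally show ?thesis .
qed



definition Sf :: "nat \<Rightarrow> nat \<Rightarrow> real \<Rightarrow> real" where
  "Sf i j w = (\<Sum>l=0..i-1. ((real j - real i) / real i) * real ((j-1) choose (i-1-l))
       * real ((l+j) choose l) * (w gchoose (l+j+1)))"

lemma Rpol_Sf: "Rpol n i j x = Sf i j (2*x + 2*real n + 2)"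
  by (simp add: Rpol_def Sf_def)

lemma prod_lemma:
  fixes w :: real
  assumes j: "1 \<le> j"
  shows "(w gchoose j) * ((w - 1) gchoose a)
       = (\<Sum>l=0..a. real ((j-1) choose (a-l)) * real ((l+j) choose l) * (w gchoose (l+j)))"
proof -
  have e: "(w - 1) = (w - of_nat j) + of_nat (j-1)" using j by (simp add: of_nat_diff)
  have "(w - 1) gchoose a = (\<Sum>l=0..a. ((w - of_nat j) gchoose l) * (of_nat (j-1) gchoose (a - l)))"
    by (subst e) (rule gbinomial_Vandermonde[symmetric])
  then have "(w gchoose j) * ((w - 1) gchoose a)
      = (\<Sum>l=0..a. ((w gchoose j) * ((w - of_nat j) gchoose l)) * (of_nat (j-1) gchoose (a - l)))"
    by (simp add: sum_distrib_left mult.assoc)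
  also have "\<dots> = (\<Sum>l=0..a. real ((j-1) choose (a-l)) * real ((l+j) choose l) * (w gchoose (l+j)))"
  proof (rule sum.cong[OF refl])
    fix l
    have tr: "(w gchoose (l+j)) * (of_nat (l+j) gchoose j) = (w gchoose j) * ((w - of_nat j) gchoose (l+j-j))"
      by (rule gbinomial_trinomial_revision) simp
    have "(l+j) choose j = (l+j) choose l"
      using binomial_symmetric[of l "l+j"] by simp
    then have "(of_nat (l+j) gchoose j :: real) = real ((l+j) choose l)"
      by (metis binomial_gbinomial)
    moreover have "(of_nat (j-1) gchoose (a - l) :: real) = real ((j-1) choose (a-l))"
      by (metis binomial_gbinomial)
    ultimately show "(w gchoose j) * ((w - of_nat j) gchoose l) * (of_nat (j-1) gchoose (a - l))
        = real ((j-1) choose (a-l)) * real ((l+j) choose l) * (w gchoose (l+j))"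
      using tr by (simp add: algebra_simps)
  qed
  finally show ?thesis .
qed

lemma delta_Sf:
  fixes w :: real
  assumes i: "1 \<le> i" and j: "1 \<le> j"
  shows "Sf i j (w+1) - Sf i j w = (w gchoose i) * ((w-1) gchoose (j-1)) - ((w-1) gchoose (i-1)) * (w gchoose j)"
proof -
  define c where "c l = ((real j - real i) / real i) * real ((j-1) choose (i-1-l)) * real ((l+j) choose l)" for l
  have "Sf i j (w+1) - Sf i j w = (\<Sum>l=0..i-1. c l * (((w+1) gchoose (l+j+1)) - (w gchoose (l+j+1))))"
    unfolding Sf_def c_def sum_subtractf[symmetric]
    by (rule sum.cong[OF refl]) (simp only: right_diff_distrib)
  also have "\<dots> = (\<Sum>l=0..i-1. c l * (w gchoose (l+j)))"
  proof (rule sum.cong[OF refl])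
    fix l
    have "(w+1) gchoose (Suc (l+j)) = (w gchoose (l+j)) + (w gchoose Suc (l+j))" by (rule gbinomial_Suc_Suc)
    then show "c l * (((w+1) gchoose (l+j+1)) - (w gchoose (l+j+1))) = c l * (w gchoose (l+j))" by simp
  qed
  also have "\<dots> = ((real j - real i) / real i) * (\<Sum>l=0..i-1. real ((j-1) choose (i-1-l)) * real ((l+j) choose l) * (w gchoose (l+j)))"
    by (simp add: c_def sum_distrib_left mult.assoc)
  also have "\<dots> = ((real j - real i) / real i) * ((w gchoose j) * ((w - 1) gchoose (i-1)))"
    using prod_lemma[OF j, of w "i-1"] by simp
  also have "\<dots> = (w gchoose i) * ((w-1) gchoose (j-1)) - ((w-1) gchoose (i-1)) * (w gchoose j)"
  proof -
    have bi: "w gchoose i = (w / of_nat i) * ((w-1) gchoose (i-1))" using i by (intro gbinomial_absorption') simp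
    have bj: "w gchoose j = (w / of_nat j) * ((w-1) gchoose (j-1))" using j by (intro gbinomial_absorption') simp
    have i0: "real i \<noteq> 0" "real j \<noteq> 0" using i j by auto
    show ?thesis unfolding bi bj using i0 by (simp add: field_simps)
  qed
  finally show ?thesis .
qed

lemma Sf_1: "1 \<le> j \<Longrightarrow> Sf i j 1 = 0"
proof -
  assume j: "1 \<le> j"
  have "\<And>l. (1::real) gchoose (l+j+1) = 0"
  proof -
    fix l
    have "(1::nat) choose (l+j+1) = 0" using j by (simp add: binomial_eq_0)
    then show "(1::real) gchoose (l+j+1) = 0" by (metis binomial_gbinomial of_nat_0 of_nat_1)
  qed
  then show ?thesis by (simp add: Sf_def)
qed



definition ispoly :: "(real \<Rightarrow> real) \<Rightarrow> bool" where
  "ispoly f \<longleftrightarrow> (\<exists>p. \<forall>x. f x = poly p x)"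

lemma ispoly_const: "ispoly (\<lambda>x. c)"
  unfolding ispoly_def by (rule exI[of _ "[:c:]"]) simp

lemma ispoly_id: "ispoly (\<lambda>x. x)"
  unfolding ispoly_def by (rule exI[of _ "[:0,1:]"]) simp

lemma ispoly_add: "ispoly f \<Longrightarrow> ispoly g \<Longrightarrow> ispoly (\<lambda>x. f x + g x)"
  unfolding ispoly_def by (metis poly_add)

lemma ispoly_diff: "ispoly f \<Longrightarrow> ispoly g \<Longrightarrow> ispoly (\<lambda>x. f x - g x)"
  unfolding ispoly_def by (metis poly_diff)

lemma ispoly_mult: "ispoly f \<Longrightarrow> ispoly g \<Longrightarrow> ispoly (\<lambda>x. f x * g x)"
  unfolding ispoly_def by (metis poly_mult)

lemma ispoly_sum: "(\<And>a. a \<in> A \<Longrightarrow> ispoly (f a)) \<Longrightarrow> ispoly (\<lambda>x. \<Sum>a\<in>A. f a x)"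
proof -
  assume h: "\<And>a. a \<in> A \<Longrightarrow> ispoly (f a)"
  then have "\<forall>a\<in>A. \<exists>p. \<forall>x. f a x = poly p x" by (simp add: ispoly_def)
  then obtain P where P: "\<forall>a\<in>A. \<forall>x. f a x = poly (P a) x" by metis
  show ?thesis unfolding ispoly_def
    by (rule exI[of _ "\<Sum>a\<in>A. P a"]) (simp add: poly_sum P)
qed

lemma ispoly_prod: "(\<And>a. a \<in> A \<Longrightarrow> ispoly (f a)) \<Longrightarrow> ispoly (\<lambda>x. \<Prod>a\<in>A. f a x)"
proof -
  assume h: "\<And>a. a \<in> A \<Longrightarrow> ispoly (f a)"
  then have "\<forall>a\<in>A. \<exists>p. \<forall>x. f a x = poly p x" by (simp add: ispoly_def)
  then obtain P where P: "\<forall>a\<in>A. \<forall>x. f a x = poly (P a) x" by metis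
  show ?thesis unfolding ispoly_def
    by (rule exI[of _ "\<Prod>a\<in>A. P a"]) (simp add: poly_prod P)
qed

lemma ispoly_affine: "ispoly f \<Longrightarrow> ispoly (\<lambda>x. f (c + d * x))"
proof -
  assume "ispoly f"
  then obtain p where p: "\<forall>x. f x = poly p x" by (auto simp: ispoly_def)
  show ?thesis unfolding ispoly_def
    by (rule exI[of _ "pcompose p [:c, d:]"]) (simp add: poly_pcompose p mult.commute)
qed

lemma ispoly_gchoose: "ispoly (\<lambda>x. x gchoose k)"
proof -
  have e: "(x gchoose k) = (1 / fact k) * (\<Prod>i = 0..<k. x - of_nat i)" for x :: real
    using gbinomial_mult_fact'[of x k] by (simp add: field_simps)
  have "ispoly (\<lambda>x. (1 / fact k) * (\<Prod>i = 0..<k. x - of_nat i))"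
    by (intro ispoly_mult ispoly_const ispoly_prod ispoly_diff ispoly_id)
  then show ?thesis unfolding e .
qed

lemma ispoly_zero:
  assumes "ispoly f" and z: "\<And>m::nat. f (real m) = 0"
  shows "f x = 0"
proof -
  obtain p where p: "\<forall>x. f x = poly p x" using assms(1) by (auto simp: ispoly_def)
  have "p = 0"
  proof (rule ccontr)
    assume "p \<noteq> 0"
    then have "finite {x. poly p x = 0}" by (rule poly_roots_finite)
    moreover have "range real \<subseteq> {x. poly p x = 0}" using z p by auto
    ultimately have "finite (range (real :: nat \<Rightarrow> real))" by (rule finite_subset[rotated])
    then have "finite (UNIV :: nat set)" using finite_imageD[of real UNIV] inj_of_nat by blast
    then show False by simp
  qed
  then show ?thesis using p by simp
qed

lemma ispoly_Sf: "ispoly (Sf i j)"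
proof -
  have "ispoly (\<lambda>w. \<Sum>l=0..i-1. ((real j - real i) / real i) * real ((j-1) choose (i-1-l))
       * real ((l+j) choose l) * (w gchoose (l+j+1)))"
    by (intro ispoly_sum ispoly_mult ispoly_const ispoly_gchoose)
  then show ?thesis unfolding Sf_def[abs_def] .
qed

lemma R_cong:
  assumes a: "a \<in> {1..K}" and b: "b \<in> {1..K}"
  shows "Sf a b (2 - w) = (\<Sum>k=1..K. \<Sum>l=1..K. Pm a k * Sf k l w * Pm b l)"
proof -
  define E where "E w = (\<Sum>k=1..K. \<Sum>l=1..K. Pm a k * Sf k l w * Pm b l) - Sf a b (2 - w)" for w
  have polyE: "ispoly E"
  proof -
    have "ispoly (\<lambda>w. Sf a b (2 + (-1) * w))" by (rule ispoly_affine[OF ispoly_Sf])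
    then have "ispoly (\<lambda>w. (\<Sum>k=1..K. \<Sum>l=1..K. Pm a k * Sf k l w * Pm b l) - Sf a b (2 + (-1) * w))"
      by (intro ispoly_diff ispoly_sum ispoly_mult ispoly_const ispoly_Sf)
    then show ?thesis unfolding E_def[abs_def] by simp
  qed
  have per: "E (w + 1) = E w" for w
  proof -
    define e where "e k = w gchoose k" for k
    define f where "f k = (w - 1) gchoose (k - 1)" for k
    have "(\<Sum>k=1..K. \<Sum>l=1..K. Pm a k * Sf k l (w+1) * Pm b l) - (\<Sum>k=1..K. \<Sum>l=1..K. Pm a k * Sf k l w * Pm b l)
        = (\<Sum>k=1..K. \<Sum>l=1..K. (Pm a k * e k) * (Pm b l * f l)) - (\<Sum>k=1..K. \<Sum>l=1..K. (Pm a k * f k) * (Pm b l * e l))"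
    proof -
      have "(\<Sum>k=1..K. \<Sum>l=1..K. Pm a k * Sf k l (w+1) * Pm b l) - (\<Sum>k=1..K. \<Sum>l=1..K. Pm a k * Sf k l w * Pm b l)
          = (\<Sum>k=1..K. \<Sum>l=1..K. Pm a k * (Sf k l (w+1) - Sf k l w) * Pm b l)"
        by (simp add: sum_subtractf[symmetric] algebra_simps)
      also have "\<dots> = (\<Sum>k=1..K. \<Sum>l=1..K. (Pm a k * e k) * (Pm b l * f l) - (Pm a k * f k) * (Pm b l * e l))"
      proof (intro sum.cong refl)
        fix k l assume "k \<in> {1..K}" "l \<in> {1..K}"
        then have h: "Sf k l (w+1) - Sf k l w = e k * f l - f k * e l"
          unfolding e_def f_def by (intro delta_Sf) auto
        show "Pm a k * (Sf k l (w+1) - Sf k l w) * Pm b l = (Pm a k * e k) * (Pm b l * f l) - (Pm a k * f k) * (Pm b l * e l)"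
          unfolding h by (simp add: algebra_simps)
      qed
      also have "\<dots> = (\<Sum>k=1..K. \<Sum>l=1..K. (Pm a k * e k) * (Pm b l * f l)) - (\<Sum>k=1..K. \<Sum>l=1..K. (Pm a k * f k) * (Pm b l * e l))"
        by (simp add: sum_subtractf)
      finally show ?thesis .
    qed
    also have "\<dots> = (\<Sum>k=1..K. Pm a k * e k) * (\<Sum>l=1..K. Pm b l * f l) - (\<Sum>k=1..K. Pm a k * f k) * (\<Sum>l=1..K. Pm b l * e l)"
      by (simp add: sum_product)
    also have "\<dots> = (- ((-w) gchoose a)) * ((-(w-1)-1) gchoose (b-1)) - ((-(w-1)-1) gchoose (a-1)) * (- ((-w) gchoose b))"
    proof -
      have h1: "(\<Sum>k=1..K. Pm a k * e k) = - ((-w) gchoose a)"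
        unfolding e_def using Pe_lemma[of a K w] a by simp
      have h2: "(\<Sum>l=1..K. Pm b l * e l) = - ((-w) gchoose b)"
        unfolding e_def using Pe_lemma[of b K w] b by simp
      have h3: "(\<Sum>k=1..K. Pm a k * f k) = ((-(w-1)-1) gchoose (a-1))"
        unfolding f_def using Pf_lemma[of a K "w-1"] a by simp
      have h4: "(\<Sum>l=1..K. Pm b l * f l) = ((-(w-1)-1) gchoose (b-1))"
        unfolding f_def using Pf_lemma[of b K "w-1"] b by simp
      show ?thesis unfolding h1 h2 h3 h4 ..
    qed
    finally have d1: "(\<Sum>k=1..K. \<Sum>l=1..K. Pm a k * Sf k l (w+1) * Pm b l) - (\<Sum>k=1..K. \<Sum>l=1..K. Pm a k * Sf k l w * Pm b l)
       = (- ((-w) gchoose a)) * ((-w) gchoose (b-1)) - ((-w) gchoose (a-1)) * (- ((-w) gchoose b))" by simp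
    have d2: "Sf a b (2 - w) - Sf a b (2 - (w+1)) = ((1-w) gchoose a) * ((-w) gchoose (b-1)) - ((-w) gchoose (a-1)) * ((1-w) gchoose b)"
    proof -
      have "Sf a b ((1 - w) + 1) - Sf a b (1 - w) = ((1-w) gchoose a) * (((1-w)-1) gchoose (b-1)) - (((1-w)-1) gchoose (a-1)) * ((1-w) gchoose b)"
        using a b by (intro delta_Sf) auto
      moreover have "(1 - w) + 1 = 2 - w" "2 - (w+1) = 1 - w" "(1-w)-1 = -w" by simp_all
      ultimately show ?thesis by simp
    qed
    have pa: "((1-w) gchoose a) = ((-w) gchoose (a-1)) + ((-w) gchoose a)"
    proof -
      obtain a' where "a = Suc a'" using a by (cases a) auto
      then show ?thesis using gbinomial_Suc_Suc[of "-w" a'] by (simp add: add.commute)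
    qed
    have pb: "((1-w) gchoose b) = ((-w) gchoose (b-1)) + ((-w) gchoose b)"
    proof -
      obtain b' where "b = Suc b'" using b by (cases b) auto
      then show ?thesis using gbinomial_Suc_Suc[of "-w" b'] by (simp add: add.commute)
    qed
    show ?thesis unfolding E_def using d1 d2 pa pb by (simp add: algebra_simps)
  qed
  have E1: "E 1 = 0"
    unfolding E_def using b by (simp add: Sf_1)
  have Enat: "E (real m) = 0" for m
  proof (induction m)
    case 0
    have "E 0 = E (0 + 1)" using per[of 0] by simp
    then show ?case using E1 by simp
  next
    case (Suc m)
    then show ?case using per[of "real m"] by (simp add: add.commute)
  qed
  have "E w = 0" by (rule ispoly_zero[OF polyE Enat])
  then show ?thesis unfolding E_def by simp
qed



lemma pf_cong_ext:
  assumes "\<And>a b. a \<in> {1..2*m} \<Longrightarrow> b \<in> {1..2*m} \<Longrightarrow> A a b = B a b"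
  shows "pfaffian m A = pfaffian m B"
proof -
  have "(\<Sum>s | s permutes {1..2*m}. of_int (sign s) * (\<Prod>i=1..m. A (s (2*i-1)) (s (2*i))))
      = (\<Sum>s | s permutes {1..2*m}. of_int (sign s) * (\<Prod>i=1..m. B (s (2*i-1)) (s (2*i))))"
  proof (intro sum.cong refl arg_cong2[where f="(*)"] prod.cong)
    fix s i assume s: "s \<in> {s. s permutes {1..2*m}}" and i: "i \<in> {1..m}"
    have "2*i-1 \<in> {1..2*m}" "2*i \<in> {1..2*m}" using i by auto
    then have "s (2*i-1) \<in> {1..2*m}" "s (2*i) \<in> {1..2*m}"
      using permutes_in_image[of s "{1..2*m}"] s by auto
    then show "A (s (2*i-1)) (s (2*i)) = B (s (2*i-1)) (s (2*i))" by (rule assms)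
  qed
  then show ?thesis by (simp add: pfaffian_def)
qed

lemma sum_Qm_low:
  assumes "1 \<le> a" "a \<le> 2*n+1"
  shows "(\<Sum>k=1..2*n+2. Qm n a k * X k) = (\<Sum>k=1..2*n+1. Pm a k * X k)"
proof -
  have e: "{1..2*n+2} = insert (2*n+2) {1..2*n+1}" by auto
  have "(\<Sum>k=1..2*n+2. Qm n a k * X k) = (\<Sum>k=1..2*n+1. Qm n a k * X k)"
    unfolding e using assms by (simp add: Qm_def)
  also have "\<dots> = (\<Sum>k=1..2*n+1. Pm a k * X k)"
    using assms by (intro sum.cong refl) (simp add: Qm_def Pm_def)
  finally show ?thesis .
qed

lemma sum_Qm_top:
  "(\<Sum>k=1..2*n+2. Qm n (2*n+2) k * X k) = X (2*n+2)"
proof -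
  have e: "{1..2*n+2} = insert (2*n+2) {1..2*n+1}" by auto
  have "(\<Sum>k=1..2*n+1. Qm n (2*n+2) k * X k) = 0"
    by (intro sum.neutral) (simp add: Qm_def)
  then show ?thesis unfolding e by (simp add: Qm_def)
qed

lemma entry:
  fixes x :: real
  assumes a: "a \<in> {1..2*n+2}" and b: "b \<in> {1..2*n+2}"
  shows "Mmat n (- 2 * real n - 1 - x) a b
       = (\<Sum>k=1..2*n+2. Qm n a k * (\<Sum>l=1..2*n+2. Qm n b l * Mmat n x k l))"
proof -
  define K where "K = 2*n+1"
  define x' where "x' = - 2 * real n - 1 - x"
  define y where "y = x + real n"
  have yx': "x' + real n = - (y + 1)" "x' + real n + 1 = - y" "2*x' + 2*real n + 1 = - (2*y+1)"
    "2*x' + 2*real n + 2 = 2 - (2*x + 2*real n + 2)"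
    by (simp_all add: x'_def y_def algebra_simps)
  consider "a \<le> K" "b \<le> K" | "a \<le> K" "b = K+1" | "a = K+1" "b \<le> K" | "a = K+1" "b = K+1"
    using a b by (force simp: K_def)
  then show ?thesis
  proof cases
    case 1
    have a1: "1 \<le> a" "a \<le> 2*n+1" and b1: "1 \<le> b" "b \<le> 2*n+1" using 1 a b by (auto simp: K_def)
    define u where "u k = (2*y+1) gchoose k" for k
    define v where "v k = (y gchoose k) + ((y+1) gchoose k)" for k
    define w where "w = 2*x + 2*real n + 2"
    have Mkl: "Mmat n x k l = Sf k l w + u k * v l - u l * v k" if "k \<le> 2*n+1" "l \<le> 2*n+1" for k l
      using that by (simp add: Mmat_def Rpol_Sf Tpol_def u_def v_def w_def y_def algebra_simps)
    have "(\<Sum>k=1..2*n+2. Qm n a k * (\<Sum>l=1..2*n+2. Qm n b l * Mmat n x k l))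
        = (\<Sum>k=1..2*n+1. Pm a k * (\<Sum>l=1..2*n+1. Pm b l * Mmat n x k l))"
      using sum_Qm_low[OF a1] sum_Qm_low[OF b1] by simp
    also have "\<dots> = (\<Sum>k=1..2*n+1. Pm a k * (\<Sum>l=1..2*n+1. Pm b l * (Sf k l w + u k * v l - u l * v k)))"
      by (intro sum.cong refl arg_cong2[where f="(*)"]) (simp_all add: Mkl)
    also have "\<dots> = (\<Sum>k=1..2*n+1. \<Sum>l=1..2*n+1. Pm a k * Sf k l w * Pm b l)
        + (\<Sum>k=1..2*n+1. \<Sum>l=1..2*n+1. (Pm a k * u k) * (Pm b l * v l))
        - (\<Sum>k=1..2*n+1. \<Sum>l=1..2*n+1. (Pm a k * v k) * (Pm b l * u l))"
      by (simp add: sum_distrib_left sum.distrib sum_subtractf algebra_simps)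
    also have "\<dots> = Sf a b (2 - w)
        + (\<Sum>k=1..2*n+1. Pm a k * u k) * (\<Sum>l=1..2*n+1. Pm b l * v l)
        - (\<Sum>l=1..2*n+1. Pm b l * u l) * (\<Sum>k=1..2*n+1. Pm a k * v k)"
    proof -
      have R: "(\<Sum>k=1..2*n+1. \<Sum>l=1..2*n+1. Pm a k * Sf k l w * Pm b l) = Sf a b (2 - w)"
        using R_cong[of a "2*n+1" b w] a1 b1 by simp
      have p1: "(\<Sum>k=1..2*n+1. \<Sum>l=1..2*n+1. (Pm a k * u k) * (Pm b l * v l))
          = (\<Sum>k=1..2*n+1. Pm a k * u k) * (\<Sum>l=1..2*n+1. Pm b l * v l)"
        by (simp only: sum_product)
      have p2: "(\<Sum>k=1..2*n+1. \<Sum>l=1..2*n+1. (Pm a k * v k) * (Pm b l * u l))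
          = (\<Sum>l=1..2*n+1. Pm b l * u l) * (\<Sum>k=1..2*n+1. Pm a k * v k)"
      proof -
        have "(\<Sum>l=1..2*n+1. Pm b l * u l) * (\<Sum>k=1..2*n+1. Pm a k * v k)
            = (\<Sum>k=1..2*n+1. Pm a k * v k) * (\<Sum>l=1..2*n+1. Pm b l * u l)" by (rule mult.commute)
        then show ?thesis by (simp only: sum_product)
      qed
      show ?thesis unfolding R p1 p2 ..
    qed
    also have "\<dots> = Sf a b (2 - w)
        + (- ((-(2*y+1)) gchoose a)) * (- ((-y) gchoose b) - ((-(y+1)) gchoose b))
        - (- ((-(2*y+1)) gchoose b)) * (- ((-y) gchoose a) - ((-(y+1)) gchoose a))"
    proof -
      have va: "(\<Sum>k=1..2*n+1. Pm a k * v k) = - ((-y) gchoose a) - ((-(y+1)) gchoose a)"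
        unfolding v_def using Pe_lemma[OF a1, of y] Pe_lemma[OF a1, of "y+1"]
        by (simp add: distrib_left sum.distrib)
      have vb: "(\<Sum>k=1..2*n+1. Pm b k * v k) = - ((-y) gchoose b) - ((-(y+1)) gchoose b)"
        unfolding v_def using Pe_lemma[OF b1, of y] Pe_lemma[OF b1, of "y+1"]
        by (simp add: distrib_left sum.distrib)
      have ua: "(\<Sum>k=1..2*n+1. Pm a k * u k) = - ((-(2*y+1)) gchoose a)"
        unfolding u_def by (rule Pe_lemma[OF a1])
      have ub: "(\<Sum>k=1..2*n+1. Pm b k * u k) = - ((-(2*y+1)) gchoose b)"
        unfolding u_def by (rule Pe_lemma[OF b1])
      show ?thesis unfolding va vb ua ub by (simp add: algebra_simps)
    qed
    also have "\<dots> = Mmat n x' a b"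
    proof -
      have yy: "- (y + 1) + 1 = - y" by simp
      have m: "Mmat n x' a b = Rpol n a b x' + Tpol n a b x' - Tpol n b a x'" using a1 b1 by (simp add: Mmat_def)
      have r: "Rpol n a b x' = Sf a b (2 - w)" by (simp only: Rpol_Sf yx'(4) w_def)
      have t1: "Tpol n a b x' = ((-(2*y+1)) gchoose a) * (((-(y+1)) gchoose b) + ((-y) gchoose b))"
        by (simp only: Tpol_def yx' yy)
      have t2: "Tpol n b a x' = ((-(2*y+1)) gchoose b) * (((-(y+1)) gchoose a) + ((-y) gchoose a))"
        by (simp only: Tpol_def yx' yy)
      show ?thesis unfolding m r t1 t2 by (simp add: algebra_simps)
    qed
    finally show ?thesis by (simp add: x'_def)
  next
    case 2
    have a1: "1 \<le> a" "a \<le> 2*n+1" using 2 a by (auto simp: K_def)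
    have "(\<Sum>k=1..2*n+2. Qm n a k * (\<Sum>l=1..2*n+2. Qm n b l * Mmat n x k l))
        = (\<Sum>k=1..2*n+1. Pm a k * Mmat n x k (2*n+2))"
      using sum_Qm_low[OF a1] sum_Qm_top 2 by (simp add: K_def)
    also have "\<dots> = (\<Sum>k=1..2*n+1. Pm a k * ((x + real n) gchoose (k-1)))"
      by (intro sum.cong refl) (simp add: Mmat_def)
    also have "\<dots> = (-(x + real n)-1) gchoose (a-1)" by (rule Pf_lemma[OF a1])
    also have "\<dots> = Mmat n x' a b" using a1 2 by (simp add: Mmat_def K_def yx' y_def)
    finally show ?thesis by (simp add: x'_def)
  next
    case 3
    have b1: "1 \<le> b" "b \<le> 2*n+1" using 3 b by (auto simp: K_def)
    have "(\<Sum>k=1..2*n+2. Qm n a k * (\<Sum>l=1..2*n+2. Qm n b l * Mmat n x k l))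
        = (\<Sum>l=1..2*n+1. Pm b l * Mmat n x (2*n+2) l)"
      using sum_Qm_low[OF b1] sum_Qm_top 3 by (simp add: K_def)
    also have "\<dots> = - (\<Sum>l=1..2*n+1. Pm b l * ((x + real n) gchoose (l-1)))"
      by (simp add: Mmat_def sum_negf[symmetric])
    also have "\<dots> = - ((-(x + real n)-1) gchoose (b-1))" by (simp only: Pf_lemma[OF b1])
    also have "\<dots> = Mmat n x' a b" using b1 3 by (simp add: Mmat_def K_def yx' y_def)
    finally show ?thesis by (simp add: x'_def)
  next
    case 4
    then have ab: "a = 2*n+2" "b = 2*n+2" by (simp_all add: K_def)
    have "(\<Sum>k=1..2*n+2. Qm n a k * (\<Sum>l=1..2*n+2. Qm n b l * Mmat n x k l))
        = (\<Sum>l=1..2*n+2. Qm n b l * Mmat n x (2*n+2) l)"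
      unfolding ab by (rule sum_Qm_top)
    also have "\<dots> = Mmat n x (2*n+2) (2*n+2)" unfolding ab by (rule sum_Qm_top)
    also have "\<dots> = 0" by (simp add: Mmat_def)
    finally show ?thesis using ab by (simp add: Mmat_def)
  qed
qed

theorem mainTheorem10:
  fixes n :: nat
  shows "\<forall>x::real. pfaffian (n+1) (Mmat n x)
           = (-1) ^ n * pfaffian (n+1) (Mmat n (- 2 * real n - 1 - x))"
proof
  fix x :: real
  have e2: "2 * (n+1) = 2*n+2" by simp
  have "pfaffian (n+1) (Mmat n (- 2 * real n - 1 - x))
      = pfaffian (n+1) (\<lambda>a b. \<Sum>k\<in>{1..2*(n+1)}. \<Sum>l\<in>{1..2*(n+1)}. Qm n a k * Mmat n x k l * Qm n b l)"
  proof (rule pf_cong_ext)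
    fix a b assume a: "a \<in> {1..2*(n+1)}" and b: "b \<in> {1..2*(n+1)}"
    have "Mmat n (- 2 * real n - 1 - x) a b
       = (\<Sum>k=1..2*n+2. Qm n a k * (\<Sum>l=1..2*n+2. Qm n b l * Mmat n x k l))"
      using a b by (intro entry) auto
    also have "\<dots> = (\<Sum>k\<in>{1..2*(n+1)}. \<Sum>l\<in>{1..2*(n+1)}. Qm n a k * Mmat n x k l * Qm n b l)"
      unfolding e2 by (simp add: sum_distrib_left algebra_simps)
    finally show "Mmat n (- 2 * real n - 1 - x) a b = (\<Sum>k\<in>{1..2*(n+1)}. \<Sum>l\<in>{1..2*(n+1)}. Qm n a k * Mmat n x k l * Qm n b l)" .
  qed
  also have "\<dots> = Dq {1..2*(n+1)} (Qm n) id * pfaffian (n+1) (Mmat n x)"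
    by (rule pf_congr)
  also have "\<dots> = (-1)^n * pfaffian (n+1) (Mmat n x)"
  proof -
    have "Dq {1..2*(n+1)} (Qm n) id = (-1)^n" using Dq_Qm[of n] by (simp only: e2)
    then show ?thesis by simp
  qed
  finally have h: "pfaffian (n+1) (Mmat n (- 2 * real n - 1 - x)) = (-1)^n * pfaffian (n+1) (Mmat n x)" .
  have "((-1::real)^n) * (-1)^n = 1" by (simp flip: power_mult_distrib)
  then show "pfaffian (n+1) (Mmat n x) = (-1) ^ n * pfaffian (n+1) (Mmat n (- 2 * real n - 1 - x))"
    unfolding h by (simp add: mult.assoc[symmetric])
qed

end
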